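(* If a graph $G$ with $n\ge 2$ vertices contains a matching pair $(M_1,M_2)$ of size $X=|M_1|+|M_2|$, then the $(1,2)$-TSP cost of $G$ is at most $2n-\tfrac{3}{4}X$.
   Context: A matching pair of $G$ is a pair $(M_1,M_2)$ of edge-disjoint matchings of $G$; its size is $|M_1|+|M_2|$. The $(1,2)$-TSP cost of a graph $G=(V,E)$ on $n$ vertices is $\min\sum_{i=1}^n D(v_i,v_{i+1})$ over cyclic orderings $(v_1,\dots,v_n)$ of $V$ ($v_{n+1}=v_1$), where $D(u,v)=1$ if $uv\in E$ and $D(u,v)=2$ otherwise. *)

theory Defs
  imports Complex_Main
begin

definition simple_graph :: "'a set \<Rightarrow> 'a set set \<Rightarrow> bool" where
  "simple_graph V E \<longleftrightarrow> finite V \<and> (\<forall>e\<in>E. e \<subseteq> V \<and> card e = 2)"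

definition matching :: "'a set set \<Rightarrow> 'a set set \<Rightarrow> bool" where
  "matching E M \<longleftrightarrow> M \<subseteq> E \<and> (\<forall>e1\<in>M. \<forall>e2\<in>M. e1 \<noteq> e2 \<longrightarrow> e1 \<inter> e2 = {})"

definition matching_pair :: "'a set set \<Rightarrow> 'a set set \<Rightarrow> 'a set set \<Rightarrow> bool" where
  "matching_pair E M1 M2 \<longleftrightarrow> matching E M1 \<and> matching E M2 \<and> M1 \<inter> M2 = {}"

definition dist12 :: "'a set set \<Rightarrow> 'a \<Rightarrow> 'a \<Rightarrow> nat" where
  "dist12 E u v = (if {u, v} \<in> E then 1 else 2)"

definition tour_cost :: "'a set set \<Rightarrow> 'a list \<Rightarrow> nat" where
  "tour_cost E vs = (\<Sum>i<length vs. dist12 E (vs ! i) (vs ! ((i + 1) mod length vs)))"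

definition tsp12_cost :: "'a set \<Rightarrow> 'a set set \<Rightarrow> nat" where
  "tsp12_cost V E = Min {tour_cost E vs | vs. distinct vs \<and> set vs = V}"

end

theory Submission imports Defs begin

definition good :: "'a set set \<Rightarrow> 'a list \<Rightarrow> nat" where
  "good F xs = card {i. Suc i < length xs \<and> {xs!i, xs!Suc i} \<in> F}"

definition fpath :: "'a set set \<Rightarrow> 'a list \<Rightarrow> bool" where
  "fpath F xs = (\<forall>i. Suc i < length xs \<longrightarrow> {xs!i, xs!Suc i} \<in> F)"

definition pe :: "'a list \<Rightarrow> 'a set set" where
  "pe xs = (\<lambda>i. {xs!i, xs!Suc i}) ` {i. Suc i < length xs}"

definition tri3 :: "'a set set \<Rightarrow> bool" where
  "tri3 F = (\<forall>e1\<in>F. \<forall>e2\<in>F. \<forall>e3\<in>F. e1\<inter>e2\<noteq>{} \<longrightarrow> e1\<inter>e3\<noteq>{} \<longrightarrow> e2\<inter>e3\<noteq>{} \<longrightarrow> e1=e2 \<or> e1=e3 \<or> e2=e3)"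

lemma good_mono: "F' \<subseteq> F \<Longrightarrow> good F' xs \<le> good F xs"
  unfolding good_def by (rule card_mono) (auto intro: finite_subset[of _ "{..<length xs}"])

lemma tour_good:
  assumes "F \<subseteq> E" "vs \<noteq> []"
  shows "tour_cost E vs + good F vs \<le> 2 * length vs"
proof -
  obtain m where m: "length vs = Suc m" using assms(2) by (cases vs) auto
  define d where "d i = dist12 E (vs ! i) (vs ! ((i + 1) mod length vs))" for i
  define ind where "ind i = (if {vs!i, vs!Suc i} \<in> F then 1 else 0::nat)" for i
  have tc: "tour_cost E vs = (\<Sum>i<m. d i) + d m"
    unfolding tour_cost_def d_def m by simp
  have "{i. Suc i < length vs \<and> {vs!i, vs!Suc i} \<in> F} = {i\<in>{..<m}. {vs!i, vs!Suc i} \<in> F}"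
    using m by auto
  then have g: "good F vs = (\<Sum>i<m. ind i)"
    unfolding good_def ind_def by (simp add: sum.If_cases Int_def conj_commute)
  have "\<And>i. i < m \<Longrightarrow> d i + ind i \<le> 2"
  proof -
    fix i assume "i < m"
    then have "(i + 1) mod length vs = Suc i" using m by simp
    then show "d i + ind i \<le> 2" using assms(1) unfolding d_def ind_def dist12_def by auto
  qed
  then have "(\<Sum>i<m. d i + ind i) \<le> (\<Sum>i<m. 2)" by (rule sum_mono) simp
  moreover have "d m \<le> 2" unfolding d_def dist12_def by auto
  ultimately show ?thesis using tc g m by (simp add: sum.distrib)
qed

lemma good_append:
  assumes "fpath F P" "P \<noteq> []"
  shows "(length P - 1) + good F ws \<le> good F (P @ ws)"
proof -
  define I where "I = {i. Suc i < length (P@ws) \<and> {(P@ws)!i, (P@ws)!Suc i} \<in> F}"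
  define B where "B = {i. Suc i < length ws \<and> {ws!i, ws!Suc i} \<in> F}"
  have fin: "finite I" unfolding I_def by (rule finite_subset[of _ "{..<length (P@ws)}"]) auto
  have A: "{..<length P - 1} \<subseteq> I"
  proof
    fix i assume "i \<in> {..<length P - 1}"
    then have "Suc i < length P" by auto
    then show "i \<in> I" using assms(1) unfolding I_def fpath_def by (auto simp: nth_append)
  qed
  have Bs: "(+) (length P) ` B \<subseteq> I"
    unfolding I_def B_def by (auto simp: nth_append)
  have dj: "{..<length P - 1} \<inter> (+) (length P) ` B = {}" by auto
  have "card ({..<length P - 1} \<union> (+) (length P) ` B) = (length P - 1) + card B"
    by (subst card_Un_disjoint) (auto simp: dj card_image B_def intro!: finite_imageI intro: finite_subset[of _ "{..<length ws}"])
  moreover have "card ({..<length P - 1} \<union> (+) (length P) ` B) \<le> card I"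
    using A Bs fin by (intro card_mono) auto
  ultimately show ?thesis unfolding good_def I_def[symmetric] B_def[symmetric] by simp
qed

lemma tri3_sub: "tri3 F \<Longrightarrow> F' \<subseteq> F \<Longrightarrow> tri3 F'"
  unfolding tri3_def by blast

lemma main:
  "finite V \<Longrightarrow> \<forall>e\<in>F. e \<subseteq> V \<and> card e = 2 \<Longrightarrow> tri3 F \<Longrightarrow>
   \<exists>vs. distinct vs \<and> set vs = V \<and> 3 * card F \<le> 4 * good F vs"
proof (induction "card V" arbitrary: V F rule: less_induct)
  case less
  note finV = less.prems(1) and edg = less.prems(2) and tri = less.prems(3)
  show ?case
  proof (cases "V = {}")
    case True
    then have "F = {}" using edg by fastforce
    then show ?thesis using True by (auto simp: good_def intro: exI[of _ "[]"])
  next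
    case False
    define L where "L = {xs. distinct xs \<and> set xs \<subseteq> V \<and> xs \<noteq> [] \<and> fpath F xs}"
    have "L \<subseteq> {xs. set xs \<subseteq> V \<and> length xs \<le> card V}"
      unfolding L_def using finV by (auto simp flip: distinct_card intro: card_mono)
    then have finL: "finite L" using finite_lists_length_le[OF finV] finite_subset by blast
    obtain v where "v \<in> V" using False by auto
    then have "[v] \<in> L" unfolding L_def fpath_def by auto
    then have Lne: "length ` L \<noteq> {}" by auto
    have "Max (length ` L) \<in> length ` L" using finL Lne by (intro Max_in) auto
    then obtain P where PL: "P \<in> L" and Pl: "length P = Max (length ` L)" by auto
    have Pmax: "\<And>Q. Q \<in> L \<Longrightarrow> length Q \<le> length P"
      using finL Pl by simp
    have Pd: "distinct P" "set P \<subseteq> V" "P \<noteq> []" "fpath F P" using PL unfolding L_def by auto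
    define k where "k = length P - 1"
    have lenP: "length P = Suc k" using Pd(3) unfolding k_def by (cases P) auto
    have maxhd: "y \<in> set P" if h: "{y, hd P} \<in> F" for y
    proof (rule ccontr)
      assume ny: "y \<notin> set P"
      have yV: "y \<in> V" using h edg by auto
      have "fpath F (y # P)" unfolding fpath_def
      proof (intro allI impI)
        fix i assume "Suc i < length (y # P)"
        then show "{(y # P) ! i, (y # P) ! Suc i} \<in> F"
          using h Pd(3,4) unfolding fpath_def by (cases i) (auto simp: hd_conv_nth)
      qed
      then have "y # P \<in> L" using ny yV Pd unfolding L_def by auto
      then show False using Pmax by fastforce
    qed
    have maxlast: "y \<in> set P" if h: "{last P, y} \<in> F" for y
    proof (rule ccontr)
      assume ny: "y \<notin> set P"
      have yV: "y \<in> V" using h edg by auto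
      have "fpath F (P @ [y])" unfolding fpath_def
      proof (intro allI impI)
        fix i assume i: "Suc i < length (P @ [y])"
        show "{(P @ [y]) ! i, (P @ [y]) ! Suc i} \<in> F"
        proof (cases "Suc i < length P")
          case True then show ?thesis using Pd(4) unfolding fpath_def by (auto simp: nth_append)
        next
          case False
          then have "i = k" using i lenP by auto
          then show ?thesis using h lenP Pd(3) by (auto simp: nth_append last_conv_nth)
        qed
      qed
      then have "P @ [y] \<in> L" using ny yV Pd unfolding L_def by auto
      then show False using Pmax by fastforce
    qed
    have interior: "e \<in> pe P" if i: "0 < i" "Suc i < length P" and e: "e \<in> F" "P!i \<in> e" for i e
    proof -
      define e1 where "e1 = {P!(i-1), P!i}"
      define e2 where "e2 = {P!i, P!Suc i}"
      have s: "Suc (i-1) = i" using i by simp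
      have e1F: "e1 \<in> F" using spec[OF Pd(4)[unfolded fpath_def], of "i-1"] s i unfolding e1_def by simp
      have e2F: "e2 \<in> F" using Pd(4) i unfolding fpath_def e2_def by auto
      have d1: "P!(i-1) \<noteq> P!i" using Pd(1) i by (simp add: nth_eq_iff_index_eq)
      have d2: "P!(i-1) \<noteq> P!Suc i" using Pd(1) i by (simp add: nth_eq_iff_index_eq)
      have "e1 \<noteq> e2" unfolding e1_def e2_def using d1 d2 by (auto simp: doubleton_eq_iff)
      then have "e = e1 \<or> e = e2" using tri e e1F e2F unfolding tri3_def e1_def e2_def
        by (smt (verit) disjoint_iff insertCI)
      moreover have "e1 \<in> pe P" unfolding pe_def e1_def using i
        by (intro image_eqI[of _ _ "i-1"]) auto
      moreover have "e2 \<in> pe P" unfolding pe_def e2_def using i by auto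
      ultimately show ?thesis by auto
    qed
    have endp: "x = hd P \<or> x = last P" if "i < length P" "P!i = x" "\<not> (0 < i \<and> Suc i < length P)" for i x
    proof -
      have "i = 0 \<or> i = k" using that lenP by auto
      then show ?thesis using that Pd(3) lenP by (auto simp: hd_conv_nth last_conv_nth)
    qed
    have claim: "e \<in> pe P \<or> e = {hd P, last P}" if e: "e \<in> F" "e \<inter> set P \<noteq> {}" for e
    proof -
      obtain x where x: "x \<in> e" "x \<in> set P" using e by auto
      obtain a b where ab: "e = {a,b}" "a \<noteq> b" using e edg card_2_iff by metis
      obtain y where exy: "e = {x,y}" "x \<noteq> y" using ab x by blast
      obtain i where i: "i < length P" "P!i = x" using x by (auto simp: in_set_conv_nth)
      show ?thesis
      proof (cases "0 < i \<and> Suc i < length P")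
        case True then show ?thesis using interior e i x by blast
      next
        case False
        then have xe: "x = hd P \<or> x = last P" using endp i by blast
        have "y \<in> set P"
          using xe maxhd maxlast e(1) exy(1) by (auto simp: insert_commute)
        then obtain j where j: "j < length P" "P!j = y" by (auto simp: in_set_conv_nth)
        show ?thesis
        proof (cases "0 < j \<and> Suc j < length P")
          case True then show ?thesis using interior e j exy by blast
        next
          case False
          then have "y = hd P \<or> y = last P" using endp j by blast
          then show ?thesis using xe exy by (auto simp: insert_commute)
        qed
      qed
    qed
    have small: "3 \<le> k" if h: "{hd P, last P} \<in> F" "{hd P, last P} \<notin> pe P"
    proof (rule ccontr)
      assume "\<not> 3 \<le> k"
      then have "k = 0 \<or> k = 1 \<or> k = 2" by auto
      moreover have "k \<noteq> 0"
      proof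
        assume "k = 0"
        then have "hd P = last P" using lenP Pd(3) by (auto simp: hd_conv_nth last_conv_nth)
        then show False using h edg by auto
      qed
      moreover have "k \<noteq> 1"
      proof
        assume "k = 1"
        then have "{hd P, last P} = {P!0, P!Suc 0}" using lenP Pd(3) by (auto simp: hd_conv_nth last_conv_nth)
        moreover have "{P!0, P!Suc 0} \<in> pe P" unfolding pe_def using lenP \<open>k=1\<close> by auto
        ultimately show False using h by auto
      qed
      moreover have "k \<noteq> 2"
      proof
        assume "k = 2"
        then obtain a b c where abc: "P = [a,b,c]" using lenP
          by (metis (no_types, lifting) Suc_length_conv numeral_2_eq_2 length_0_conv)
        then have "{a,b} \<in> F" "{b,c} \<in> F" "{a,c} \<in> F" using Pd(4) h unfolding fpath_def
          by (auto dest: spec[of _ 0] spec[of _ 1])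
        moreover have "a \<noteq> b" "b \<noteq> c" "a \<noteq> c" using Pd(1) abc by auto
        ultimately show False using tri unfolding tri3_def
          by (smt (verit) disjoint_iff doubleton_eq_iff insertCI)
      qed
      ultimately show False by blast
    qed
    define T where "T = {e\<in>F. e \<inter> set P \<noteq> {}}"
    have Tsub: "T \<subseteq> pe P \<union> (if 3 \<le> k then {{hd P, last P}} else {})"
      using claim small unfolding T_def by fastforce
    have "{i. Suc i < length P} = {..<k}" using lenP by auto
    then have cpe: "card (pe P) \<le> k" unfolding pe_def by (metis card_image_le card_lessThan finite_lessThan)
    have finpe: "finite (pe P)" unfolding pe_def using \<open>{i. Suc i < length P} = {..<k}\<close> by simp
    have "card T \<le> card (pe P \<union> (if 3 \<le> k then {{hd P, last P}} else {}))"
      using Tsub finpe by (intro card_mono) auto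
    also have "\<dots> \<le> card (pe P) + card (if 3 \<le> k then {{hd P, last P}} else {})"
      by (rule card_Un_le)
    finally have "card T \<le> k + (if 3 \<le> k then 1 else 0)" using cpe by (auto split: if_splits)
    then have T3: "3 * card T \<le> 4 * k" by (auto split: if_splits)
    have finF: "finite F" using finV edg by (metis Pow_iff finite_Pow_iff finite_subset subsetI)
    define V' where "V' = V - set P"
    define F' where "F' = {e\<in>F. e \<inter> set P = {}}"
    have "hd P \<in> set P" using Pd(3) by simp
    then have "V - set P \<subset> V" using Pd(2) by blast
    then have "card V' < card V" unfolding V'_def using finV by (rule psubset_card_mono[rotated])
    moreover have "finite V'" using finV V'_def by auto
    moreover have "\<forall>e\<in>F'. e \<subseteq> V' \<and> card e = 2" using edg unfolding F'_def V'_def by auto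
    moreover have "tri3 F'" by (rule tri3_sub[OF tri]) (auto simp: F'_def)
    ultimately obtain ws where ws: "distinct ws" "set ws = V'" "3 * card F' \<le> 4 * good F' ws"
      using less.hyps by blast
    have "F = F' \<union> T" "F' \<inter> T = {}" unfolding F'_def T_def by auto
    then have cF: "card F = card F' + card T" using finF by (metis card_Un_disjoint finite_Un)
    have "k + good F ws \<le> good F (P @ ws)" using good_append[OF Pd(4) Pd(3)] k_def by simp
    moreover have "good F' ws \<le> good F ws" by (rule good_mono) (auto simp: F'_def)
    moreover have "distinct (P @ ws)" using Pd(1) ws V'_def by auto
    moreover have "set (P @ ws) = V" using Pd(2) ws V'_def by auto
    ultimately show ?thesis using cF T3 ws(3) by (intro exI[of _ "P @ ws"]) auto
  qed
qed

lemma mp_tri3: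
  assumes "matching_pair E M1 M2" shows "tri3 (M1 \<union> M2)"
proof -
  have M1: "\<forall>e1\<in>M1. \<forall>e2\<in>M1. e1 \<noteq> e2 \<longrightarrow> e1 \<inter> e2 = {}"
   and M2: "\<forall>e1\<in>M2. \<forall>e2\<in>M2. e1 \<noteq> e2 \<longrightarrow> e1 \<inter> e2 = {}"
    using assms unfolding matching_pair_def matching_def by simp_all
  show ?thesis unfolding tri3_def
  proof (intro ballI impI)
    fix e1 e2 e3 assume h: "e1 \<in> M1 \<union> M2" "e2 \<in> M1 \<union> M2" "e3 \<in> M1 \<union> M2"
      "e1 \<inter> e2 \<noteq> {}" "e1 \<inter> e3 \<noteq> {}" "e2 \<inter> e3 \<noteq> {}"
    show "e1 = e2 \<or> e1 = e3 \<or> e2 = e3"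
    proof (rule ccontr)
      assume n: "\<not> (e1 = e2 \<or> e1 = e3 \<or> e2 = e3)"
      show False
        using h(1,2,3) M1 M2 h(4,5,6) n by (elim UnE) meson+
    qed
  qed
qed

theorem mainTheorem16:
  fixes V :: "'a set" and E M1 M2 :: "'a set set"
  assumes "simple_graph V E"
    and "card V \<ge> 2"
    and "matching_pair E M1 M2"
  shows "real (tsp12_cost V E) \<le> 2 * real (card V) - 3 / 4 * real (card M1 + card M2)"
proof -
  have finV: "finite V" and edg: "\<forall>e\<in>E. e \<subseteq> V \<and> card e = 2"
    using assms(1) unfolding simple_graph_def by auto
  have sub: "M1 \<union> M2 \<subseteq> E" and dis: "M1 \<inter> M2 = {}"
    using assms(3) unfolding matching_pair_def matching_def by auto
  have finE: "finite E" using finV edg by (metis Pow_iff finite_Pow_iff finite_subset subsetI)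
  have cF: "card (M1 \<union> M2) = card M1 + card M2"
    using finE sub dis by (metis card_Un_disjoint finite_Un finite_subset)
  obtain vs where vs: "distinct vs" "set vs = V" "3 * card (M1 \<union> M2) \<le> 4 * good (M1 \<union> M2) vs"
    using main[OF finV _ mp_tri3[OF assms(3)]] edg sub by blast
  have len: "length vs = card V" using vs distinct_card by metis
  then have ne: "vs \<noteq> []" using assms(2) by auto
  have tg: "tour_cost E vs + good (M1 \<union> M2) vs \<le> 2 * card V"
    using tour_good[OF sub ne] len by simp
  have "{vs. distinct vs \<and> set vs = V} \<subseteq> {xs. set xs \<subseteq> V \<and> length xs \<le> card V}"
    by (auto simp flip: distinct_card)
  then have "finite {vs. distinct vs \<and> set vs = V}"
    using finite_lists_length_le[OF finV] finite_subset by blast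
  then have "finite {tour_cost E vs | vs. distinct vs \<and> set vs = V}"
    by (rule finite_image_set)
  then have "tsp12_cost V E \<le> tour_cost E vs"
    unfolding tsp12_cost_def using vs by (intro Min_le) auto
  then have "real (tsp12_cost V E) \<le> real (tour_cost E vs)" by simp
  moreover have "real (tour_cost E vs) + real (good (M1 \<union> M2) vs) \<le> 2 * real (card V)"
    using tg by (metis of_nat_add of_nat_le_iff of_nat_mult of_nat_numeral)
  moreover have "3 * real (card M1 + card M2) \<le> 4 * real (good (M1 \<union> M2) vs)"
    using vs(3) cF by (metis of_nat_le_iff of_nat_mult of_nat_numeral)
  ultimately show ?thesis by linarith
qed

end
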